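(* Every metric family with weak finite decomposition complexity also has straight finite decomposition complexity. In fact, the collection $s\mathfrak{D}$ of metric families with straight finite decomposition complexity is stable under weak decomposition.
   Context: A metric family is a set of metric spaces; it is uniformly bounded if $\sup\{\mathrm{diam}(Z): Z\in\mathcal{Z}\}<\infty$. Subsets $A,B$ are $r$-disjoint if $d(A,B)>r$. A $(k,r)$-decomposition of a metric space $X$ over a metric family $\mathcal{Y}$ is a decomposition $X=X_0\cup X_1\cup\cdots\cup X_{k-1}$ with each $X_i=\bigsqcup_j X_{ij}$ a union of pairwise $r$-disjoint subsets and each $X_{ij}\in\mathcal{Y}$. A family $\mathcal{X}$ is $(k,r)$-decomposable over $\mathcal{Y}$ if every member of $\mathcal{X}$ admits a $(k,r)$-decomposition over $\mathcal{Y}$; for $k=2$ this is called $r$-decomposable. For a collection $\mathfrak{U}$ of metric families, $\mathcal{X}$ is $k$-decomposable over $\mathfrak{U}$ if for every $r>0$ there is $\mathcal{Y}_r\in\mathfrak{U}$ such that $\mathcal{X}$ is $(k,r)$-decomposable over $\mathcal{Y}_r$; $\mathcal{X}$ is weakly decomposable over $\mathfrak{U}$ if it is $k$-decomposable over $\mathfrak{U}$ for some $k\in\mathbb{N}$; $\mathfrak{U}$ is stable under weak decomposition if every family weakly decomposable over $\mathfrak{U}$ lies in $\mathfrak{U}$. The collection of families with weak finite decomposition complexity (wFDC) is the smallest collection containing all uniformly bounded families and stable under weak decomposition. A metric family $\mathcal{X}$ has straight finite decomposition complexity (sFDC) if for every sequence $R_1<R_2<\cdots$ of positive numbers there exist $n\in\mathbb{N}$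 and metric families $\mathcal{X}_0=\mathcal{X},\mathcal{X}_1,\dots,\mathcal{X}_n$ such that $\mathcal{X}_i$ is $R_{i+1}$-decomposable over $\mathcal{X}_{i+1}$ for each $i<n$ and $\mathcal{X}_n$ is uniformly bounded; $s\mathfrak{D}$ denotes the collection of such families. *)

theory Defs
  imports "HOL-Analysis.Analysis"
begin

type_synonym 'a mfamily = "'a metric set"

definition uniformly_bounded :: "'a mfamily \<Rightarrow> bool" where
  "uniformly_bounded Z \<longleftrightarrow>
     (\<exists>B::real. \<forall>m\<in>Z. \<forall>x\<in>mspace m. \<forall>y\<in>mspace m. mdist m x y \<le> B)"

definition r_disjoint :: "'a metric \<Rightarrow> real \<Rightarrow> 'a set \<Rightarrow> 'a set \<Rightarrow> bool" where
  "r_disjoint m r A B \<longleftrightarrow>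
     A = {} \<or> B = {} \<or> Inf {mdist m a b | a b. a \<in> A \<and> b \<in> B} > r"

definition kr_decomposition :: "nat \<Rightarrow> real \<Rightarrow> 'a metric \<Rightarrow> 'a mfamily \<Rightarrow> bool" where
  "kr_decomposition k r X Y \<longleftrightarrow>
     (\<exists>U :: nat \<Rightarrow> 'a set set.
        mspace X = (\<Union>i<k. \<Union>(U i)) \<and>
        (\<forall>i<k. (\<forall>A\<in>U i. \<forall>B\<in>U i. A \<noteq> B \<longrightarrow> r_disjoint X r A B) \<and>
               (\<forall>A\<in>U i. A \<subseteq> mspace X \<and> submetric X A \<in> Y)))"

definition kr_decomposable :: "nat \<Rightarrow> real \<Rightarrow> 'a mfamily \<Rightarrow> 'a mfamily \<Rightarrow> bool" where
  "kr_decomposable k r XX Y \<longleftrightarrow> (\<forall>X\<in>XX. kr_decomposition k r X Y)"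

abbreviation r_decomposable :: "real \<Rightarrow> 'a mfamily \<Rightarrow> 'a mfamily \<Rightarrow> bool" where
  "r_decomposable r XX Y \<equiv> kr_decomposable 2 r XX Y"

definition k_decomposable_over :: "nat \<Rightarrow> 'a mfamily \<Rightarrow> 'a mfamily set \<Rightarrow> bool" where
  "k_decomposable_over k XX UU \<longleftrightarrow> (\<forall>r>0. \<exists>Y\<in>UU. kr_decomposable k r XX Y)"

definition weakly_decomposable_over :: "'a mfamily \<Rightarrow> 'a mfamily set \<Rightarrow> bool" where
  "weakly_decomposable_over XX UU \<longleftrightarrow> (\<exists>k::nat. k_decomposable_over k XX UU)"

definition stable_weak_decomp :: "'a mfamily set \<Rightarrow> bool" where
  "stable_weak_decomp UU \<longleftrightarrow> (\<forall>XX. weakly_decomposable_over XX UU \<longrightarrow> XX \<in> UU)"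

definition wFDC :: "'a mfamily set" where
  "wFDC = \<Inter>{UU. (\<forall>Z. uniformly_bounded Z \<longrightarrow> Z \<in> UU) \<and> stable_weak_decomp UU}"

text \<open>Straight FDC; the sequence R_1 < R_2 < ... is R 0 < R 1 < ... (shifted by one).\<close>
definition sFDC :: "'a mfamily \<Rightarrow> bool" where
  "sFDC XX \<longleftrightarrow>
     (\<forall>R :: nat \<Rightarrow> real. strict_mono R \<and> (\<forall>i. R i > 0) \<longrightarrow>
        (\<exists>(n::nat) (F :: nat \<Rightarrow> 'a mfamily). F 0 = XX \<and>
           (\<forall>i<n. r_decomposable (R i) (F i) (F (Suc i))) \<and> uniformly_bounded (F n)))"

definition sD :: "'a mfamily set" where
  "sD = {XX. sFDC XX}"

end

theory Submission
  imports Defs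
begin

lemma krd_mono_r:
  assumes "kr_decomposition k r X Y" "r' \<le> r"
  shows "kr_decomposition k r' X Y"
proof -
  have rd: "r_disjoint X r A B \<Longrightarrow> r_disjoint X r' A B" for A B
    using assms(2) unfolding r_disjoint_def by auto
  from assms(1) obtain U where U: "mspace X = (\<Union>i<k. \<Union>(U i))"
    "\<forall>i<k. (\<forall>A\<in>U i. \<forall>B\<in>U i. A \<noteq> B \<longrightarrow> r_disjoint X r A B) \<and>
               (\<forall>A\<in>U i. A \<subseteq> mspace X \<and> submetric X A \<in> Y)"
    unfolding kr_decomposition_def by (elim exE conjE) (rule that)
  have "\<forall>i<k. (\<forall>A\<in>U i. \<forall>B\<in>U i. A \<noteq> B \<longrightarrow> r_disjoint X r' A B) \<and>
               (\<forall>A\<in>U i. A \<subseteq> mspace X \<and> submetric X A \<in> Y)"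
    using U(2) rd by simp
  with U(1) show ?thesis unfolding kr_decomposition_def by (intro exI[of _ U]) simp
qed

lemma krd_mono_Y:
  assumes "kr_decomposition k r X Y" "Y \<subseteq> Y'"
  shows "kr_decomposition k r X Y'"
proof -
  obtain U where U: "mspace X = (\<Union>i<k. \<Union>(U i))"
    "\<forall>i<k. (\<forall>A\<in>U i. \<forall>B\<in>U i. A \<noteq> B \<longrightarrow> r_disjoint X r A B) \<and>
               (\<forall>A\<in>U i. A \<subseteq> mspace X \<and> submetric X A \<in> Y)"
    using assms unfolding kr_decomposition_def by (elim exE conjE) (rule that)
  have "\<forall>i<k. (\<forall>A\<in>U i. \<forall>B\<in>U i. A \<noteq> B \<longrightarrow> r_disjoint X r A B) \<and>
               (\<forall>A\<in>U i. A \<subseteq> mspace X \<and> submetric X A \<in> Y')"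
    using U(2) assms(2) by (metis subsetD)
  with U(1) show ?thesis unfolding kr_decomposition_def by (intro exI[of _ U]) simp
qed

lemma krd_Suc:
  assumes "kr_decomposition k r X Y"
  shows "kr_decomposition (Suc k) r X Y"
proof -
  obtain U where U: "mspace X = (\<Union>i<k. \<Union>(U i))"
    "\<forall>i<k. (\<forall>A\<in>U i. \<forall>B\<in>U i. A \<noteq> B \<longrightarrow> r_disjoint X r A B) \<and>
               (\<forall>A\<in>U i. A \<subseteq> mspace X \<and> submetric X A \<in> Y)"
    using assms unfolding kr_decomposition_def by (elim exE conjE) (rule that)
  define U' where "U' = (\<lambda>i. if i < k then U i else {})"
  have "mspace X = (\<Union>i<Suc k. \<Union>(U' i))"
    using U(1) unfolding U'_def lessThan_Suc by auto
  moreover have "\<forall>i<Suc k. (\<forall>A\<in>U' i. \<forall>B\<in>U' i. A \<noteq> B \<longrightarrow> r_disjoint X r A B) \<and>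
               (\<forall>A\<in>U' i. A \<subseteq> mspace X \<and> submetric X A \<in> Y)"
    using U(2) unfolding U'_def by auto
  ultimately show ?thesis unfolding kr_decomposition_def by (intro exI[of _ U']) simp
qed

lemma krd_trivial:
  assumes "X \<in> Y"
  shows "kr_decomposition 2 r X Y"
proof -
  define U where "U = (\<lambda>i::nat. if i = 0 then {mspace X} else {})"
  have "(\<Union>i<2. \<Union>(U i)) = mspace X"
    unfolding U_def by (auto split: if_splits)
  moreover have "\<forall>i<2. (\<forall>A\<in>U i. \<forall>B\<in>U i. A \<noteq> B \<longrightarrow> r_disjoint X r A B) \<and>
               (\<forall>A\<in>U i. A \<subseteq> mspace X \<and> submetric X A \<in> Y)"
    unfolding U_def using assms by auto
  ultimately show ?thesis unfolding kr_decomposition_def by (intro exI[of _ U]) simp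
qed

lemma krd_split:
  assumes "kr_decomposition m r Z Y" "m \<ge> 1"
  shows "kr_decomposition 2 r Z (Y \<union> {V. kr_decomposition (m-1) r V Y \<and> mspace V \<noteq> {}})"
proof -
  obtain U where U: "mspace Z = (\<Union>i<m. \<Union>(U i))"
    "\<forall>i<m. (\<forall>A\<in>U i. \<forall>B\<in>U i. A \<noteq> B \<longrightarrow> r_disjoint Z r A B) \<and>
               (\<forall>A\<in>U i. A \<subseteq> mspace Z \<and> submetric Z A \<in> Y)"
    using assms unfolding kr_decomposition_def by (elim exE conjE) (rule that)
  define W where "W = (\<Union>i\<in>{1..<m}. \<Union>(U i))"
  define U' where "U' = (\<lambda>i::nat. if i = 0 then U 0 else {W} - {{}})"
  have lm: "{..<m} = insert 0 {1..<m}" using assms(2) by auto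
  have W_sub: "W \<subseteq> mspace Z" using U unfolding W_def by auto
  have l2: "{..<2::nat} = {0,1}" by auto
  have uw: "\<Union>({W} - {{}}) = W" by auto
  have sp0: "mspace Z = \<Union>(U 0) \<union> W"
    using U(1) unfolding lm W_def by simp
  have sp: "mspace Z = (\<Union>i<2. \<Union>(U' i))"
    unfolding sp0 l2 U'_def using uw by simp
  have subW: "kr_decomposition (m-1) r (submetric Z W) Y"
  proof -
    define U'' where "U'' = (\<lambda>i. U (Suc i))"
    have "mspace (submetric Z W) = (\<Union>i<m-1. \<Union>(U'' i))"
    proof -
      have e: "{1..<m} = Suc ` {0..<m-1}" using assms(2) by simp
      have "(\<Union>i<m-1. \<Union>(U'' i)) = W"
        unfolding U''_def W_def e by (simp add: atLeast0LessThan)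
      then show ?thesis using W_sub by auto
    qed
    moreover have "\<forall>i<m-1. (\<forall>A\<in>U'' i. \<forall>B\<in>U'' i. A \<noteq> B \<longrightarrow> r_disjoint (submetric Z W) r A B) \<and>
               (\<forall>A\<in>U'' i. A \<subseteq> mspace (submetric Z W) \<and> submetric (submetric Z W) A \<in> Y)"
    proof (intro allI impI conjI ballI)
      fix i A B assume i: "i < m-1" and A: "A \<in> U'' i"
      have iSuc: "Suc i < m" using i by auto
      have AW: "A \<subseteq> W" using A iSuc unfolding U''_def W_def by (auto intro!: bexI[of _ "Suc i"])
      { assume "B \<in> U'' i" "A \<noteq> B"
        then show "r_disjoint (submetric Z W) r A B"
          using U(2) iSuc A unfolding U''_def r_disjoint_def by auto }
      show "A \<subseteq> mspace (submetric Z W)" using AW W_sub by auto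
      have "submetric (submetric Z W) A = submetric Z A" using AW
        by (simp add: Int_absorb1)
      then show "submetric (submetric Z W) A \<in> Y"
        using U(2) iSuc A unfolding U''_def by auto
    qed
    ultimately show ?thesis unfolding kr_decomposition_def by (intro exI[of _ U'']) simp
  qed
  have "\<forall>i<2. (\<forall>A\<in>U' i. \<forall>B\<in>U' i. A \<noteq> B \<longrightarrow> r_disjoint Z r A B) \<and>
               (\<forall>A\<in>U' i. A \<subseteq> mspace Z \<and> submetric Z A \<in> (Y \<union> {V. kr_decomposition (m-1) r V Y \<and> mspace V \<noteq> {}}))"
  proof (intro allI impI)
    fix i :: nat assume "i < 2"
    then consider "i = 0" | "i = 1" by linarith
    then show "(\<forall>A\<in>U' i. \<forall>B\<in>U' i. A \<noteq> B \<longrightarrow> r_disjoint Z r A B) \<and>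
               (\<forall>A\<in>U' i. A \<subseteq> mspace Z \<and> submetric Z A \<in> (Y \<union> {V. kr_decomposition (m-1) r V Y \<and> mspace V \<noteq> {}}))"
    proof cases
      case 1
      have h: "(\<forall>A\<in>U 0. \<forall>B\<in>U 0. A \<noteq> B \<longrightarrow> r_disjoint Z r A B) \<and>
               (\<forall>A\<in>U 0. A \<subseteq> mspace Z \<and> submetric Z A \<in> Y)"
        using spec[OF U(2), of 0] assms(2) by simp
      show ?thesis using h 1 unfolding U'_def by simp
    next
      case 2 then show ?thesis using subW W_sub unfolding U'_def by (auto simp: Int_absorb2)
    qed
  qed
  with sp show ?thesis unfolding kr_decomposition_def by (intro exI[of _ U']) simp
qed

lemma krd_zero_empty: "kr_decomposition 0 r V Y \<Longrightarrow> mspace V = {}"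
  unfolding kr_decomposition_def by auto

lemma ub_sD: "uniformly_bounded Z \<Longrightarrow> Z \<in> sD"
  unfolding sD_def sFDC_def
  by (auto intro!: exI[of _ 0] exI[of _ "\<lambda>_. Z"])

lemma stable_sD: "stable_weak_decomp (sD :: 'a mfamily set)"
  unfolding stable_weak_decomp_def
proof (intro allI impI)
  fix XX :: "'a mfamily"
  assume "weakly_decomposable_over XX sD"
  then obtain k where k: "k_decomposable_over k XX sD"
    unfolding weakly_decomposable_over_def by blast
  define K where "K = Suc k"
  show "XX \<in> sD" unfolding sD_def mem_Collect_eq sFDC_def
  proof (intro allI impI)
    fix R :: "nat \<Rightarrow> real" assume R: "strict_mono R \<and> (\<forall>i. R i > 0)"
    define r where "r = R K"
    have "r > 0" using R r_def by auto
    then obtain Y where Y: "Y \<in> sD" "kr_decomposable k r XX Y"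
      using k unfolding k_decomposable_over_def by auto
    have XXK: "\<forall>X\<in>XX. kr_decomposition K r X Y"
    proof
      fix X assume "X \<in> XX"
      then have "kr_decomposition k r X Y" using Y(2) unfolding kr_decomposable_def by simp
      then show "kr_decomposition K r X Y" unfolding K_def by (rule krd_Suc)
    qed
    define R' where "R' = (\<lambda>i. R (K + i))"
    have R'p: "strict_mono R' \<and> (\<forall>i. R' i > 0)"
      using R unfolding R'_def strict_mono_def by auto
    have sY: "sFDC Y" using Y(1) unfolding sD_def by simp
    obtain n' F' where F': "F' 0 = Y" "\<forall>i<n'. r_decomposable (R' i) (F' i) (F' (Suc i))"
      "uniformly_bounded (F' n')"
      using sY[unfolded sFDC_def, rule_format, OF R'p] by (elim exE conjE) (rule that)
    define G where "G = (\<lambda>m. {V. kr_decomposition m r V Y \<and> mspace V \<noteq> {}})"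
    have G0: "G 0 = {}" unfolding G_def using krd_zero_empty by auto
    define F where "F = (\<lambda>j. if j = 0 then XX else if j \<le> K then Y \<union> G (K - j) else F' (j - K))"
    have FK: "F K = Y" unfolding F_def K_def using G0 by simp
    have Rle: "R i \<le> r" if "i < K" for i
      using R that unfolding r_def strict_mono_def by (simp add: less_imp_le)
    have step1: "r_decomposable (R i) (F i) (F (Suc i))" if "i < K" for i
      unfolding kr_decomposable_def
    proof
      fix X assume X: "X \<in> F i"
      have tgt: "F (Suc i) = Y \<union> G (K - Suc i)"
        using that unfolding F_def by simp
      have "kr_decomposition 2 r X (F (Suc i))"
      proof (cases "i = 0")
        case True
        have "X \<in> XX" using X True unfolding F_def by simp
        then have h1: "kr_decomposition K r X Y" using XXK by simp
        have h2: "1 \<le> K" unfolding K_def by simp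
        have h: "kr_decomposition 2 r X (Y \<union> G (K - 1))"
          unfolding G_def using h1 h2 by (rule krd_split)
        have e: "K - 1 = K - Suc i" using True by simp
        show ?thesis using h unfolding tgt e .
      next
        case False
        then have "X \<in> Y \<union> G (K - i)" using X that unfolding F_def by simp
        then show ?thesis
        proof
          assume "X \<in> Y"
          show ?thesis unfolding tgt by (rule krd_mono_Y[OF krd_trivial[OF \<open>X \<in> Y\<close>]]) simp
        next
          assume "X \<in> G (K - i)"
          then have h1: "kr_decomposition (K - i) r X Y" unfolding G_def by simp
          have h2: "1 \<le> K - i" using that by simp
          have h: "kr_decomposition 2 r X (Y \<union> G (K - i - 1))"
            unfolding G_def using h1 h2 by (rule krd_split)
          have e: "K - i - 1 = K - Suc i" by simp
          show ?thesis using h unfolding tgt e .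
        qed
      qed
      then show "kr_decomposition 2 (R i) X (F (Suc i))" by (rule krd_mono_r[OF _ Rle[OF that]])
    qed
    have step2: "r_decomposable (R i) (F i) (F (Suc i))" if "K \<le> i" "i < K + n'" for i
    proof -
      have "F i = F' (i - K)"
      proof (cases "i = K")
        case True then show ?thesis using FK F'(1) by simp
      next
        case False then show ?thesis using that unfolding F_def K_def by auto
      qed
      moreover have "F (Suc i) = F' (Suc (i - K))"
      proof -
        have e: "Suc i - K = Suc (i - K)" using that by (simp add: Suc_diff_le)
        have "F (Suc i) = F' (Suc i - K)" using that unfolding F_def by simp
        then show ?thesis unfolding e .
      qed
      moreover have "R i = R' (i - K)" unfolding R'_def using that by simp
      ultimately show ?thesis using F'(2) that by auto
    qed
    have "F (K + n') = F' n'"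
    proof (cases "n' = 0")
      case True then show ?thesis using FK F'(1) by simp
    next
      case False then show ?thesis unfolding F_def K_def by auto
    qed
    moreover have "F 0 = XX" unfolding F_def by simp
    moreover have "\<forall>i<K + n'. r_decomposable (R i) (F i) (F (Suc i))"
      using step1 step2 by (meson not_le)
    ultimately show "\<exists>(n::nat) (F :: nat \<Rightarrow> 'a mfamily). F 0 = XX \<and>
           (\<forall>i<n. r_decomposable (R i) (F i) (F (Suc i))) \<and> uniformly_bounded (F n)"
      using F'(3) by (intro exI[of _ "K+n'"] exI[of _ F] conjI) simp_all
  qed
qed

theorem proposition4p7:
  shows "stable_weak_decomp (sD :: 'a mfamily set) \<and> (wFDC :: 'a mfamily set) \<subseteq> sD"
proof
  show "stable_weak_decomp (sD :: 'a mfamily set)" by (rule stable_sD)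
  show "(wFDC :: 'a mfamily set) \<subseteq> sD"
    unfolding wFDC_def apply (rule Inter_lower) using stable_sD ub_sD by auto
qed

end
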